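(* We have $\psi_{FV}=\psi_{YZL}\circ\Psi$ as maps from $\mathfrak{S}_{n+1}$ to $\mathcal{LH}_n$.
   Context: A 2-Motzkin path of length $n$ is a word $\mathbf{s}=s_1\ldots s_n$ on the alphabet $\{\textsc{U},\textsc{D},\textsc{L}_r,\textsc{L}_b\}$ with as many letters $\textsc{U}$ as $\textsc{D}$ and heights $h_i(\mathbf{s})=|s_1\ldots s_i|_{\textsc{U}}-|s_1\ldots s_i|_{\textsc{D}}\ge 0$ for $i=1,\ldots,n$, $h_0(\mathbf{s})=0$. A Laguerre history of length $n$ is a pair $(\mathbf{s},\mathbf{p})$ with $\mathbf{s}$ a 2-Motzkin path of length $n$ and $\mathbf{p}=(p_1,\ldots,p_n)$ with $0\le p_i\le h_{i-1}(\mathbf{s})$; $\mathcal{LH}_n$ denotes the set of Laguerre histories of length $n$. Fran\c con–Viennot bijection $\psi_{FV}:\mathfrak{S}_{n+1}\to\mathcal{LH}_n$: for $\sigma\in\mathfrak{S}_{n+1}$ with convention $\sigma(0)=\sigma(n+2)=0$, a value $\sigma(j)$ is a peak if $\sigma(j-1)<\sigma(j)>\sigma(j+1)$, a valley if $\sigma(j-1)>\sigma(j)<\sigma(j+1)$, a double ascent if $\sigma(j-1)<\sigma(j)<\sigma(j+1)$, a double descent if $\sigma(j-1)>\sigma(j)>\sigma(j+1)$. Then $\psi_{FV}(\sigma)=(\mathbf{s},\mathbf{p})$ with, for $i=1,\ldots,n$, $s_i=\textsc{U}$ if $i$ is a valley, $\textsc{D}$ if $i$ is a peak, $\textsc{L}_b$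 if $i$ is a double ascent, $\textsc{L}_r$ if $i$ is a double descent of $\sigma$, and $p_i=(2\text{-}13)_i\sigma$, where $(2\text{-}13)_i\sigma=\#\{j: i<j<n+1,\ \sigma(j)<\sigma(i)<\sigma(j+1)\}$ (the number of occurrences of the vincular pattern $2\text{-}13$ in which the letter $i$ plays the role of the "2"). Yan–Zhou–Lin bijection $\psi_{YZL}:\mathfrak{S}_{n+1}\to\mathcal{LH}_n$: for $\sigma\in\mathfrak{S}_{n+1}$, $\psi_{YZL}(\sigma)=(\mathbf{s},\mathbf{p})$ where for $i=1,\ldots,n$: $s_i=\textsc{U}$ if $i<\sigma(i)$ and $i+1\le\sigma^{-1}(i+1)$; $s_i=\textsc{D}$ if $i\ge\sigma(i)$ and $i+1>\sigma^{-1}(i+1)$; $s_i=\textsc{L}_b$ if $i<\sigma(i)$ and $i+1>\sigma^{-1}(i+1)$; $s_i=\textsc{L}_r$ if $i\ge\sigma(i)$ and $i+1\le\sigma^{-1}(i+1)$; and $p_i=\mathsf{nest}_i\sigma=\#\{j: j<i<\sigma(i)<\sigma(j)\ \text{or}\ \sigma(j)<\sigma(i)\le i<j\}$. The bijection $\Phi$ on $\mathfrak{S}_m$ (Clarke–Steingr\'imsson–Zeng): for $\sigma\in\mathfrak{S}_m$, a letter $\sigma(i)$ is a descent top (resp. descent bottom) if $\sigma(i)>\sigma(i+1)$ (resp. $\sigma(i-1)>\sigma(i)$). For a letter $x=\sigma(i)$ let $(2\text{-}31)_x\sigma=\#\{j: i<j<m,\ \sigma(j+1)<x<\sigma(j)\}$.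 Form two biwords $\binom{f}{f'}$ and $\binom{g}{g'}$, where $f$ (resp. $g$) is the increasing word of descent bottoms (resp. non-descent bottoms) of $\sigma$, and $f'$ (resp. $g'$) is the arrangement of the descent tops (resp. non-descent tops) of $\sigma$ such that the number of inversions in $f'$ having $x$ as bottom (resp. the number of inversions in $g'$ having $x$ as top) equals $(2\text{-}31)_x\sigma$ for each letter $x$. Concatenate to obtain the biword $\binom{f\,g}{f'\,g'}$, rearrange its columns so that the bottom row is increasing; the top row is $\Phi(\sigma)$. The bijection $\Psi$ on $\mathfrak{S}_{n+1}$: given $\sigma\in\mathfrak{S}_{n+1}$, let $\hat\sigma\in\mathfrak{S}_{n+2}$ be $\hat\sigma=(\sigma(1)+1)(\sigma(2)+1)\cdots(\sigma(n+1)+1)\,1$ and $\tau=\Phi(\hat\sigma)$ (which satisfies $\tau(1)=n+2$); then $\Psi(\sigma)=\tau(2)\cdots\tau(n+2)\in\mathfrak{S}_{n+1}$. *)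

theory Defs
  imports "HOL-Combinatorics.Permutations"
begin

text \<open>Permutations of {1..m} are functions nat => nat that permute {1..m}
  (identity outside). Letters of 2-Motzkin paths: U, D, Lr, Lb.\<close>

datatype step = U | D | Lr | Lb

text \<open>Laguerre histories of length n are represented as a pair of lists
  (s_1 ... s_n, p_1 ... p_n).\<close>

definition ext0 :: "nat \<Rightarrow> (nat \<Rightarrow> nat) \<Rightarrow> nat \<Rightarrow> nat" where
  "ext0 m \<sigma> j = (if 1 \<le> j \<and> j \<le> m then \<sigma> j else 0)"

section \<open>Francon--Viennot\<close>

text \<open>Type (valley/peak/double ascent/double descent) of the value i of
  sigma in S_(n+1), located at position inv sigma i.\<close>
definition fv_step :: "nat \<Rightarrow> (nat \<Rightarrow> nat) \<Rightarrow> nat \<Rightarrow> step" where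
  "fv_step n \<sigma> i =
     (let k = inv \<sigma> i;
          a = ext0 (Suc n) \<sigma> (k - 1);
          b = ext0 (Suc n) \<sigma> (k + 1)
      in if a > i \<and> i < b then U
         else if a < i \<and> i > b then D
         else if a < i \<and> i < b then Lb
         else Lr)"

text \<open>(2-13)_i sigma: occurrences of the vincular pattern 2-13 where the
  letter i plays the role of the 2.\<close>
definition pat213 :: "nat \<Rightarrow> (nat \<Rightarrow> nat) \<Rightarrow> nat \<Rightarrow> nat" where
  "pat213 n \<sigma> i = card {j. inv \<sigma> i < j \<and> j < n + 1 \<and> \<sigma> j < i \<and> i < \<sigma> (j + 1)}"

definition psiFV :: "nat \<Rightarrow> (nat \<Rightarrow> nat) \<Rightarrow> step list \<times> nat list" where
  "psiFV n \<sigma> = (map (fv_step n \<sigma>) [1..<n+1], map (pat213 n \<sigma>) [1..<n+1])"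

section \<open>Yan--Zhou--Lin\<close>

definition yzl_step :: "nat \<Rightarrow> (nat \<Rightarrow> nat) \<Rightarrow> nat \<Rightarrow> step" where
  "yzl_step n \<sigma> i =
     (if i < \<sigma> i \<and> i + 1 \<le> inv \<sigma> (i + 1) then U
      else if \<sigma> i \<le> i \<and> i + 1 > inv \<sigma> (i + 1) then D
      else if i < \<sigma> i \<and> i + 1 > inv \<sigma> (i + 1) then Lb
      else Lr)"

definition nest :: "nat \<Rightarrow> (nat \<Rightarrow> nat) \<Rightarrow> nat \<Rightarrow> nat" where
  "nest n \<sigma> i = card {j \<in> {1..n+1}.
      (j < i \<and> i < \<sigma> i \<and> \<sigma> i < \<sigma> j) \<or> (\<sigma> j < \<sigma> i \<and> \<sigma> i \<le> i \<and> i < j)}"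

definition psiYZL :: "nat \<Rightarrow> (nat \<Rightarrow> nat) \<Rightarrow> step list \<times> nat list" where
  "psiYZL n \<sigma> = (map (yzl_step n \<sigma>) [1..<n+1], map (nest n \<sigma>) [1..<n+1])"

section \<open>Clarke--Steingrimsson--Zeng bijection Phi on S_m\<close>

definition desc_bottoms :: "nat \<Rightarrow> (nat \<Rightarrow> nat) \<Rightarrow> nat set" where
  "desc_bottoms m \<sigma> = {\<sigma> i | i. 2 \<le> i \<and> i \<le> m \<and> \<sigma> (i - 1) > \<sigma> i}"

definition desc_tops :: "nat \<Rightarrow> (nat \<Rightarrow> nat) \<Rightarrow> nat set" where
  "desc_tops m \<sigma> = {\<sigma> i | i. 1 \<le> i \<and> i < m \<and> \<sigma> i > \<sigma> (i + 1)}"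

definition pat231 :: "nat \<Rightarrow> (nat \<Rightarrow> nat) \<Rightarrow> nat \<Rightarrow> nat" where
  "pat231 m \<sigma> x = card {j. inv \<sigma> x < j \<and> j < m \<and> \<sigma> (j + 1) < x \<and> x < \<sigma> j}"

definition fprime :: "nat \<Rightarrow> (nat \<Rightarrow> nat) \<Rightarrow> nat list" where
  "fprime m \<sigma> = (THE l. distinct l \<and> set l = desc_tops m \<sigma> \<and>
      (\<forall>k < length l. card {a. a < k \<and> l ! a > l ! k} = pat231 m \<sigma> (l ! k)))"

definition gprime :: "nat \<Rightarrow> (nat \<Rightarrow> nat) \<Rightarrow> nat list" where
  "gprime m \<sigma> = (THE l. distinct l \<and> set l = {1..m} - desc_tops m \<sigma> \<and>
      (\<forall>k < length l. card {b. k < b \<and> b < length l \<and> l ! b < l ! k} = pat231 m \<sigma> (l ! k)))"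

text \<open>Phi(sigma)(y) is the top letter of the column of the biword (f g / f' g')
  whose bottom letter is y.\<close>
definition Phi :: "nat \<Rightarrow> (nat \<Rightarrow> nat) \<Rightarrow> nat \<Rightarrow> nat" where
  "Phi m \<sigma> y =
     (case map_of (zip (fprime m \<sigma>) (sorted_list_of_set (desc_bottoms m \<sigma>))
                   @ zip (gprime m \<sigma>) (sorted_list_of_set ({1..m} - desc_bottoms m \<sigma>))) y
      of Some v \<Rightarrow> v | None \<Rightarrow> y)"

definition hat :: "nat \<Rightarrow> (nat \<Rightarrow> nat) \<Rightarrow> nat \<Rightarrow> nat" where
  "hat n \<sigma> i = (if 1 \<le> i \<and> i \<le> n + 1 then \<sigma> i + 1 else if i = n + 2 then 1 else i)"

definition Psi :: "nat \<Rightarrow> (nat \<Rightarrow> nat) \<Rightarrow> nat \<Rightarrow> nat" where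
  "Psi n \<sigma> i = (if 1 \<le> i \<and> i \<le> n + 1 then Phi (n + 2) (hat n \<sigma>) (i + 1) else i)"

end

theory Submission
  imports Defs
begin


definition okl :: "(nat \<Rightarrow> nat) \<Rightarrow> (nat \<Rightarrow> nat) \<Rightarrow> nat set \<Rightarrow> nat list \<Rightarrow> bool" where
"okl h c A l \<longleftrightarrow> distinct l \<and> set l = A \<and>
   (\<forall>y\<in>set l. length (filter (\<lambda>z. h y < h z) (takeWhile (\<lambda>z. z \<noteq> y) l)) = c y)"

lemma tw_insert:
  assumes "x0 \<notin> set (xs @ ys)" "y \<in> set (xs @ ys)" "\<not> h y < h x0"
  shows "length (filter (\<lambda>z. h y < h z) (takeWhile (\<lambda>z. z \<noteq> y) (xs @ x0 # ys)))
       = length (filter (\<lambda>z. h y < h z) (takeWhile (\<lambda>z. z \<noteq> y) (xs @ ys)))"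
proof (cases "y \<in> set xs")
  case True
  then show ?thesis by (simp add: takeWhile_append1)
next
  case False
  then have "\<forall>z\<in>set xs. z \<noteq> y" by auto
  then show ?thesis using assms False by (auto simp: takeWhile_append2)
qed

lemma min_elem:
  assumes "finite A" "A \<noteq> {}"
  obtains x0 where "x0 \<in> A" "\<forall>y\<in>A. (h::nat\<Rightarrow>nat) x0 \<le> h y"
proof -
  have "Min (h ` A) \<in> h ` A" using assms by simp
  then obtain x0 where "x0 \<in> A" "h x0 = Min (h ` A)" by auto
  moreover have "\<forall>y\<in>A. h x0 \<le> h y" using assms calculation by simp
  ultimately show ?thesis using that by blast
qed

lemma okl_remove:
  assumes "okl h c A l" "l = xs @ x0 # ys" "inj_on h A" "\<forall>y\<in>A. h x0 \<le> h y"
  shows "okl h c (A - {x0}) (xs @ ys) \<and> length xs = c x0"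
proof -
  have d: "distinct l" and sA: "set l = A" using assms(1) unfolding okl_def by auto
  have x0A: "x0 \<in> A" using sA assms(2) by auto
  have nx: "x0 \<notin> set (xs @ ys)" using d assms(2) by auto
  have lt: "h x0 < h z" if "z \<in> A" "z \<noteq> x0" for z
    using assms(3,4) that x0A by (metis inj_on_contraD le_neq_implies_less)
  have tw: "takeWhile (\<lambda>z. z \<noteq> x0) l = xs" unfolding assms(2) using nx by (subst takeWhile_tail) (auto simp: takeWhile_eq_all_conv)
  have "filter (\<lambda>z. h x0 < h z) xs = xs" using lt sA assms(2) nx by (auto simp: filter_id_conv)
  then have len: "length xs = c x0" using assms(1) tw x0A sA unfolding okl_def by metis
  have "okl h c (A - {x0}) (xs @ ys)" unfolding okl_def
  proof (intro conjI ballI)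
    show "distinct (xs @ ys)" using d assms(2) by auto
    show "set (xs @ ys) = A - {x0}" using sA assms(2) nx by auto
    fix y assume y: "y \<in> set (xs @ ys)"
    have "y \<in> A" using y sA assms(2) by auto
    then have "\<not> h y < h x0" using assms(4) by (simp add: not_less)
    then have "length (filter (\<lambda>z. h y < h z) (takeWhile (\<lambda>z. z \<noteq> y) (xs @ ys)))
      = length (filter (\<lambda>z. h y < h z) (takeWhile (\<lambda>z. z \<noteq> y) l))"
      unfolding assms(2) by (rule tw_insert[OF nx y, symmetric])
    also have "\<dots> = c y" using assms(1) y assms(2) unfolding okl_def by auto
    finally show "length (filter (\<lambda>z. h y < h z) (takeWhile (\<lambda>z. z \<noteq> y) (xs @ ys))) = c y" .
  qed
  then show ?thesis using len by simp
qed

lemma okl_ex: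
  "finite A \<Longrightarrow> inj_on h A \<Longrightarrow> \<forall>x\<in>A. c x \<le> card {y\<in>A. h x < h y} \<Longrightarrow> \<exists>l. okl h c A l"
proof (induction "card A" arbitrary: A)
  case 0
  then have "A = {}" by simp
  then show ?case by (intro exI[of _ "[]"]) (simp add: okl_def)
next
  case (Suc k)
  then have ne: "A \<noteq> {}" by auto
  obtain x0 where x0: "x0 \<in> A" "\<forall>y\<in>A. h x0 \<le> h y" using min_elem[OF Suc(3) ne] by blast
  let ?A = "A - {x0}"
  have lt: "h x0 < h z" if "z \<in> A" "z \<noteq> x0" for z
    using Suc(4) x0 that by (metis inj_on_contraD le_neq_implies_less)
  have eqs: "{y\<in>?A. h x < h y} = {y\<in>A. h x < h y}" if "x \<in> ?A" for x
    using lt[of x] that by auto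
  have "\<exists>l. okl h c ?A l"
    apply (rule Suc(1))
    using Suc(2,3,4,5) x0 eqs by (auto simp: inj_on_diff)
  then obtain l' where l': "okl h c ?A l'" by blast
  have d': "distinct l'" and s': "set l' = ?A" using l' unfolding okl_def by auto
  have cx0: "c x0 \<le> length l'"
  proof -
    have "{y\<in>A. h x0 < h y} = ?A" using lt x0 by auto
    then show ?thesis using Suc(5) x0 d' s' distinct_card by fastforce
  qed
  define xs where "xs = take (c x0) l'"
  define ys where "ys = drop (c x0) l'"
  have l'eq: "l' = xs @ ys" unfolding xs_def ys_def by simp
  have lxs: "length xs = c x0" unfolding xs_def using cx0 by simp
  have nx: "x0 \<notin> set (xs @ ys)" using s' l'eq by auto
  have "okl h c A (xs @ x0 # ys)" unfolding okl_def
  proof (intro conjI ballI)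
    show "distinct (xs @ x0 # ys)" using d' l'eq nx by auto
    show "set (xs @ x0 # ys) = A" using s' l'eq x0 by auto
    fix y assume y: "y \<in> set (xs @ x0 # ys)"
    show "length (filter (\<lambda>z. h y < h z) (takeWhile (\<lambda>z. z \<noteq> y) (xs @ x0 # ys))) = c y"
    proof (cases "y = x0")
      case True
      have tw: "takeWhile (\<lambda>z. z \<noteq> x0) (xs @ x0 # ys) = xs" using nx by (subst takeWhile_tail) (auto simp: takeWhile_eq_all_conv)
      have "filter (\<lambda>z. h x0 < h z) xs = xs" using lt s' l'eq nx by (auto simp: filter_id_conv)
      then show ?thesis using True tw lxs by simp
    next
      case False
      then have y': "y \<in> set (xs @ ys)" using y by auto
      have "y \<in> A" using y' s' l'eq by auto
      then have "\<not> h y < h x0" using x0 by (simp add: not_less)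
      then have "length (filter (\<lambda>z. h y < h z) (takeWhile (\<lambda>z. z \<noteq> y) (xs @ x0 # ys)))
        = length (filter (\<lambda>z. h y < h z) (takeWhile (\<lambda>z. z \<noteq> y) (xs @ ys)))"
        by (rule tw_insert[OF nx y'])
      also have "\<dots> = c y" using l' y' l'eq unfolding okl_def by auto
      finally show ?thesis .
    qed
  qed
  then show ?case by blast
qed

lemma okl_uniq:
  "finite A \<Longrightarrow> inj_on h A \<Longrightarrow> okl h c A l1 \<Longrightarrow> okl h c A l2 \<Longrightarrow> l1 = l2"
proof (induction "card A" arbitrary: A l1 l2)
  case 0
  then have "A = {}" by simp
  then show ?case using 0 by (simp add: okl_def)
next
  case (Suc k)
  then have ne: "A \<noteq> {}" by auto
  obtain x0 where x0: "x0 \<in> A" "\<forall>y\<in>A. h x0 \<le> h y" using min_elem[OF Suc(3) ne] by blast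
  have "x0 \<in> set l1" "x0 \<in> set l2" using Suc(5,6) x0 unfolding okl_def by auto
  then obtain xs1 ys1 xs2 ys2 where e1: "l1 = xs1 @ x0 # ys1" and e2: "l2 = xs2 @ x0 # ys2"
    by (metis split_list)
  have r1: "okl h c (A - {x0}) (xs1 @ ys1) \<and> length xs1 = c x0"
    using okl_remove[OF Suc(5) e1 Suc(4) x0(2)] .
  have r2: "okl h c (A - {x0}) (xs2 @ ys2) \<and> length xs2 = c x0"
    using okl_remove[OF Suc(6) e2 Suc(4) x0(2)] .
  have "xs1 @ ys1 = xs2 @ ys2"
    apply (rule Suc(1)[of "A - {x0}"])
    using Suc(2,3,4) x0 r1 r2 by (auto simp: inj_on_diff)
  then have "xs1 = xs2 \<and> ys1 = ys2" using r1 r2 by (simp add: append_eq_append_conv)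
  then show ?case using e1 e2 by simp
qed

lemma okl_the:
  assumes "finite A" "inj_on h A" "\<forall>x\<in>A. c x \<le> card {y\<in>A. h x < h y}"
    and "\<And>l. P l \<longleftrightarrow> okl h c A l"
  shows "okl h c A (THE l. P l)"
proof -
  obtain l where l: "okl h c A l" using okl_ex[OF assms(1-3)] by blast
  have "P (THE l. P l)"
    apply (rule theI[of P l])
    using l assms(4) okl_uniq[OF assms(1,2)] by auto
  then show ?thesis using assms(4) by simp
qed



lemma tw_nth:
  assumes "distinct l" "k < length l"
  shows "takeWhile (\<lambda>z. z \<noteq> l!k) l = take k l"
proof -
  have e: "l = take k l @ l!k # drop (Suc k) l" using assms(2) by (simp add: id_take_nth_drop)
  have "distinct (take k l @ l!k # drop (Suc k) l)" using assms(1) e by metis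
  then have "l!k \<notin> set (take k l)" by simp
  then have "takeWhile (\<lambda>z. z \<noteq> l!k) (take k l @ l!k # drop (Suc k) l) = take k l"
    by (subst takeWhile_tail) (auto simp: takeWhile_eq_all_conv)
  then show ?thesis using e by metis
qed

lemma filter_take_card:
  assumes "k \<le> length l"
  shows "length (filter P (take k l)) = card {i. i<k \<and> P (l!i)}"
proof -
  have "{i. i < length (take k l) \<and> P (take k l ! i)} = {i. i<k \<and> P (l!i)}" using assms by auto
  then show ?thesis by (simp only: length_filter_conv_card)
qed

lemma filter_drop_card:
  assumes "k < length l"
  shows "length (filter P (drop (Suc k) l)) = card {b. k<b \<and> b<length l \<and> P(l!b)}"
proof -
  have "length (filter P l) = length (filter P (take (Suc k) l)) + length (filter P (drop (Suc k) l))"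
    by (metis append_take_drop_id filter_append length_append)
  moreover have "length (filter P l) = card {i. i<length l \<and> P (l!i)}" by (simp add: length_filter_conv_card)
  moreover have "length (filter P (take (Suc k) l)) = card {i. i<Suc k \<and> P (l!i)}"
    using assms by (simp add: filter_take_card)
  moreover have "{b. k<b \<and> b<length l \<and> P(l!b)} = {i. i<length l \<and> P (l!i)} - {i. i<Suc k \<and> P (l!i)}"
    by auto
  moreover have "card ({i. i<length l \<and> P (l!i)} - {i. i<Suc k \<and> P (l!i)})
     = card {i. i<length l \<and> P (l!i)} - card {i. i<Suc k \<and> P (l!i)}"
    apply (rule card_Diff_subset) using assms by auto
  ultimately show ?thesis by simp
qed

lemma equiv1:
  assumes "distinct l"
  shows "(\<forall>k<length l. card {a. a < k \<and> l ! a > l ! k} = c (l ! k))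
     \<longleftrightarrow> (\<forall>y\<in>set l. length (filter (\<lambda>z. y < z) (takeWhile (\<lambda>z. z \<noteq> y) l)) = c y)"
    (is "?A \<longleftrightarrow> ?B")
proof -
  let ?P = "\<lambda>y. length (filter (\<lambda>z. y < z) (takeWhile (\<lambda>z. z \<noteq> y) l)) = c y"
  let ?Q = "\<lambda>k. card {a. a < k \<and> l ! a > l ! k} = c (l ! k)"
  have key: "length (filter (\<lambda>z. l!k < z) (takeWhile (\<lambda>z. z \<noteq> l!k) l)) = card {a. a < k \<and> l ! a > l ! k}"
    if "k < length l" for k
    using that tw_nth[OF assms that] filter_take_card[of k l] by simp
  show ?thesis
  proof
    assume H: "?A"
    show "?B"
    proof
      fix y assume "y \<in> set l"
      then obtain k where k: "k < length l" "l!k = y" by (auto simp: in_set_conv_nth)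
      have "?Q k" using H k(1) by blast
      then show "?P y" using key[OF k(1)] k(2) by simp
    qed
  next
    assume H: "?B"
    show "?A"
    proof (intro allI impI)
      fix k assume k: "k < length l"
      then have "l!k \<in> set l" by simp
      then show "?Q k" using H key[OF k] by simp
    qed
  qed
qed

lemma tw_rev_nth:
  assumes "distinct l" "k < length l"
  shows "takeWhile (\<lambda>z. z \<noteq> l!k) (rev l) = rev (drop (Suc k) l)"
proof -
  have e: "l = take k l @ l!k # drop (Suc k) l" using assms(2) by (simp add: id_take_nth_drop)
  have "distinct (take k l @ l!k # drop (Suc k) l)" using assms(1) e by metis
  then have "l!k \<notin> set (drop (Suc k) l)" by simp
  then have "takeWhile (\<lambda>z. z \<noteq> l!k) (rev (drop (Suc k) l) @ l!k # rev (take k l)) = rev (drop (Suc k) l)"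
    by (subst takeWhile_tail) (auto simp: takeWhile_eq_all_conv)
  moreover have "rev l = rev (drop (Suc k) l) @ l!k # rev (take k l)"
    by (subst e) simp
  ultimately show ?thesis by metis
qed

lemma equiv2:
  assumes "distinct l"
  shows "(\<forall>k<length l. card {b. k < b \<and> b < length l \<and> l ! b < l ! k} = c (l ! k))
     \<longleftrightarrow> (\<forall>y\<in>set l. length (filter (\<lambda>z. z < y) (takeWhile (\<lambda>z. z \<noteq> y) (rev l))) = c y)"
    (is "?A \<longleftrightarrow> ?B")
proof -
  let ?P = "\<lambda>y. length (filter (\<lambda>z. z < y) (takeWhile (\<lambda>z. z \<noteq> y) (rev l))) = c y"
  let ?Q = "\<lambda>k. card {b. k < b \<and> b < length l \<and> l ! b < l ! k} = c (l ! k)"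
  have key: "length (filter (\<lambda>z. z < l!k) (takeWhile (\<lambda>z. z \<noteq> l!k) (rev l))) = card {b. k < b \<and> b < length l \<and> l ! b < l ! k}"
    if "k < length l" for k
    using that tw_rev_nth[OF assms that] filter_drop_card[OF that, of "\<lambda>z. z < l!k"]
    by (simp add: rev_filter[symmetric])
  show ?thesis
  proof
    assume H: "?A"
    show "?B"
    proof
      fix y assume "y \<in> set l"
      then obtain k where k: "k < length l" "l!k = y" by (auto simp: in_set_conv_nth)
      have "?Q k" using H k(1) by blast
      then show "?P y" using key[OF k(1)] k(2) by simp
    qed
  next
    assume H: "?B"
    show "?A"
    proof (intro allI impI)
      fix k assume k: "k < length l"
      then have "l!k \<in> set l" by simp
      then show "?Q k" using H key[OF k] by simp
    qed
  qed
qed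

lemma sorted_split:
  assumes "sorted_wrt (<) L" "map t l = L" "l = pre @ x # post"
  shows "(\<forall>y\<in>set pre. t y < t x) \<and> (\<forall>y\<in>set post. t x < (t y::nat)) \<and> t x = L ! length pre"
proof -
  have "L = map t pre @ t x # map t post" using assms(2,3) by simp
  then have "sorted_wrt (<) (map t pre @ t x # map t post)" using assms(1) by simp
  then have "(\<forall>y\<in>set pre. t y < t x) \<and> (\<forall>y\<in>set post. t x < t y)"
    by (auto simp: sorted_wrt_append)
  moreover have "t x = L ! length pre" using \<open>L = map t pre @ t x # map t post\<close> by (simp add: nth_append)
  ultimately show ?thesis by simp
qed

lemma sorted_nth_lt:
  assumes "finite S" "k < card {b\<in>S. b < (x::nat)}"
  shows "sorted_list_of_set S ! k < x"
proof (rule ccontr)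
  let ?L = "sorted_list_of_set S"
  assume a: "\<not> ?L ! k < x"
  have kl: "k < length ?L"
  proof -
    have "card {b\<in>S. b < x} \<le> card S" using assms(1) by (intro card_mono) auto
    then show ?thesis using assms by simp
  qed
  have "{b\<in>S. b < x} \<subseteq> (\<lambda>a. ?L ! a) ` {..<k}"
  proof
    fix b assume b: "b \<in> {b\<in>S. b < x}"
    then have "b \<in> set ?L" using assms(1) by simp
    then obtain a where a1: "a < length ?L" "?L ! a = b" by (metis in_set_conv_nth)
    have "a < k"
    proof (rule ccontr)
      assume "\<not> a < k"
      then have "?L ! k \<le> ?L ! a" using a1 kl
        by (intro sorted_nth_mono) (auto simp: sorted_sorted_list_of_set)
      then show False using a a1 b by simp
    qed
    then show "b \<in> (\<lambda>a. ?L ! a) ` {..<k}" using a1 by auto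
  qed
  then have "card {b\<in>S. b < x} \<le> card ((\<lambda>a. ?L ! a) ` {..<k})" by (intro card_mono) auto
  also have "\<dots> \<le> k" using card_image_le[of "{..<k}"] by simp
  finally show False using assms by simp
qed

lemma sorted_nth_ge:
  assumes "finite S" "k < card S" "card {b\<in>S. b < (x::nat)} \<le> k"
  shows "x \<le> sorted_list_of_set S ! k"
proof (rule ccontr)
  let ?L = "sorted_list_of_set S"
  assume a: "\<not> x \<le> ?L ! k"
  have kl: "k < length ?L" using assms by simp
  have "(\<lambda>a. ?L ! a) ` {..k} \<subseteq> {b\<in>S. b < x}"
  proof
    fix b assume "b \<in> (\<lambda>a. ?L ! a) ` {..k}"
    then obtain a where a1: "a \<le> k" "b = ?L ! a" by auto
    then have "?L ! a \<le> ?L ! k" using kl by (intro sorted_nth_mono) (auto simp: sorted_sorted_list_of_set)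
    moreover have "?L ! a \<in> S"
    proof -
      have "a < length ?L" using a1 kl by simp
      then have "?L ! a \<in> set ?L" by (rule nth_mem)
      then show ?thesis using assms(1) by simp
    qed
    ultimately show "b \<in> {b\<in>S. b < x}" using a a1 by auto
  qed
  moreover have "card ((\<lambda>a. ?L ! a) ` {..k}) = Suc k"
  proof -
    have "inj_on (\<lambda>a. ?L ! a) {..k}"
      using kl by (intro inj_onI) (simp add: nth_eq_iff_index_eq)
    then show ?thesis by (simp add: card_image)
  qed
  moreover have "finite {b\<in>S. b < x}" using assms(1) by simp
  ultimately have "Suc k \<le> card {b\<in>S. b < x}" using card_mono by metis
  then show False using assms by simp
qed

lemma cnt_Suc:
  "card {j. p < j \<and> j < Suc e \<and> Q j} = card {j. p < j \<and> j < e \<and> Q j} + (if p < e \<and> Q e then 1 else 0)"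
proof (cases "p < e \<and> Q e")
  case True
  then have "{j. p < j \<and> j < Suc e \<and> Q j} = insert e {j. p < j \<and> j < e \<and> Q j}" by (auto simp: less_Suc_eq)
  then show ?thesis using True by simp
next
  case False
  then have "{j. p < j \<and> j < Suc e \<and> Q j} = {j. p < j \<and> j < e \<and> Q j}" by (auto simp: less_Suc_eq)
  then show ?thesis using False by simp
qed

lemma walk:
  fixes s :: "nat \<Rightarrow> nat"
  assumes "p < e" "\<forall>j. p < j \<and> j \<le> e \<longrightarrow> s j \<noteq> x"
  shows "int (card {j. p<j \<and> j<e \<and> s (j+1) < x \<and> x < s j}) - int (card {j. p<j \<and> j<e \<and> s j < x \<and> x < s (j+1)})
    = (if x < s (p+1) then 1 else 0) - (if x < s e then 1 else 0)"
  using assms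
proof (induction e rule: less_induct)
  case (less e)
  show ?case
  proof (cases "e = Suc p")
    case True
    have "{j. p<j \<and> j<e \<and> s (j+1) < x \<and> x < s j} = {}"
      "{j. p<j \<and> j<e \<and> s j < x \<and> x < s (j+1)} = {}" using True by auto
    then show ?thesis using True by (simp only: card.empty) simp
  next
    case False
    then obtain e' where e': "e = Suc e'" "p < e'" using less.prems by (cases e) auto
    have IH: "int (card {j. p<j \<and> j<e' \<and> s (j+1) < x \<and> x < s j}) - int (card {j. p<j \<and> j<e' \<and> s j < x \<and> x < s (j+1)})
    = (if x < s (p+1) then 1 else 0) - (if x < s e' then 1 else 0)"
      using less.IH[of e'] e' less.prems by auto
    have n1: "s e' \<noteq> x" "s e \<noteq> x" using less.prems e' by auto
    define A where "A = card {j. p<j \<and> j<e' \<and> s (j+1) < x \<and> x < s j}"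
    define B where "B = card {j. p<j \<and> j<e' \<and> s j < x \<and> x < s (j+1)}"
    have cA: "card {j. p<j \<and> j<e \<and> s (j+1) < x \<and> x < s j} = A + (if s (e'+1) < x \<and> x < s e' then 1 else 0)"
      unfolding A_def e'(1) using cnt_Suc[of p e' "\<lambda>j. s (j+1) < x \<and> x < s j"] e'(2) by simp
    have cB: "card {j. p<j \<and> j<e \<and> s j < x \<and> x < s (j+1)} = B + (if s e' < x \<and> x < s (e'+1) then 1 else 0)"
      unfolding B_def e'(1) using cnt_Suc[of p e' "\<lambda>j. s j < x \<and> x < s (j+1)"] e'(2) by simp
    have IH': "int A - int B = (if x < s (p+1) then 1 else 0) - (if x < s e' then 1 else 0)"
      using IH unfolding A_def B_def .
    have se: "s e = s (e'+1)" using e' by simp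
    show ?thesis unfolding cA cB se
      using IH' n1 se by (cases "x < s e'"; cases "x < s (e'+1)") (simp_all add: not_less)
  qed
qed

lemma card_shift:
  "card {j\<in>{1..k}. P (Suc j)} = card {y\<in>{2..Suc k}. P y}"
proof -
  have "Suc ` {j\<in>{1..k}. P (Suc j)} = {y\<in>{2..Suc k}. P y}"
  proof (rule set_eqI, rule iffI)
    fix y assume "y \<in> {y\<in>{2..Suc k}. P y}"
    then show "y \<in> Suc ` {j\<in>{1..k}. P (Suc j)}"
      by (intro image_eqI[of _ _ "y - 1"]) auto
  qed auto
  then show ?thesis by (metis card_image inj_Suc inj_on_subset subset_UNIV)
qed



definition Dset :: "nat \<Rightarrow> (nat \<Rightarrow> nat) \<Rightarrow> nat set" where
  "Dset m s = {j. 1 \<le> j \<and> j < m \<and> s (j+1) < s j}"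

lemma okl_the_rev:
  assumes "finite A" "inj_on h A" "\<forall>x\<in>A. c x \<le> card {y\<in>A. h x < h y}"
    and "\<And>l. P l \<longleftrightarrow> okl h c A (rev l)"
  shows "okl h c A (rev (THE l. P l))"
proof -
  obtain l where l: "okl h c A l" using okl_ex[OF assms(1-3)] by blast
  have "P (THE l. P l)"
    apply (rule theI[of P "rev l"])
    using l assms(4) okl_uniq[OF assms(1,2)] apply simp
    using l assms(4) okl_uniq[OF assms(1,2)] by (metis rev_rev_ident)
  then show ?thesis using assms(4) by simp
qed

lemma compl_count:
  assumes "A \<subseteq> {1..m}" "x \<in> {1..(m::nat)}"
  shows "card {y\<in>{1..m}-A. y<x} = (x - 1) - card {y\<in>A. y<x}"
proof -
  have "{y\<in>{1..m}-A. y<x} = {1..<x} - {y\<in>A. y<x}" using assms by auto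
  moreover have "{y\<in>A. y<x} \<subseteq> {1..<x}" using assms by auto
  ultimately show ?thesis by (simp add: card_Diff_subset finite_subset)
qed

locale phictx =
  fixes m :: nat and s :: "nat \<Rightarrow> nat"
  assumes sp: "s permutes {1..m}" and sm: "s m = 1" and m2: "2 \<le> m"
begin

abbreviation "TT \<equiv> desc_tops m s"
abbreviation "BB \<equiv> desc_bottoms m s"
abbreviation "NN \<equiv> {1..m} - TT"
abbreviation "cc \<equiv> pat231 m s"
abbreviation "fl \<equiv> fprime m s"
abbreviation "gl \<equiv> gprime m s"
abbreviation "fb \<equiv> sorted_list_of_set BB"
abbreviation "gb \<equiv> sorted_list_of_set ({1..m} - BB)"
abbreviation "tau \<equiv> Phi m s"

lemma s_inj: "inj s" using sp by (rule permutes_inj)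

lemma s_in: "j \<in> {1..m} \<Longrightarrow> s j \<in> {1..m}" using permutes_in_image[OF sp, of j] by blast

lemma inv_s: "x \<in> {1..m} \<Longrightarrow> inv s x \<in> {1..m} \<and> s (inv s x) = x"
  using permutes_in_image[OF permutes_inv[OF sp], of x] permutes_inverses(1)[OF sp, of x] by blast

lemma s_eq: "s i = s j \<Longrightarrow> i = j" using s_inj by (simp add: inj_eq)

lemma T_eq: "TT = s ` Dset m s" unfolding desc_tops_def Dset_def by auto

lemma B_eq: "BB = (\<lambda>j. s (Suc j)) ` Dset m s"
proof (rule set_eqI, rule iffI)
  fix x assume "x \<in> BB"
  then obtain i where i: "x = s i" "2 \<le> i" "i \<le> m" "s (i - 1) > s i" unfolding desc_bottoms_def by auto
  then show "x \<in> (\<lambda>j. s (Suc j)) ` Dset m s" unfolding Dset_def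
    by (intro image_eqI[of _ _ "i - 1"]) auto
next
  fix x assume "x \<in> (\<lambda>j. s (Suc j)) ` Dset m s"
  then obtain j where "x = s (Suc j)" "1 \<le> j" "j < m" "s (j+1) < s j" unfolding Dset_def by auto
  then show "x \<in> BB" unfolding desc_bottoms_def by (intro CollectI exI[of _ "Suc j"]) auto
qed

lemma D_sub: "Dset m s \<subseteq> {1..<m}" unfolding Dset_def by auto

lemma T_sub: "TT \<subseteq> {1..m}" unfolding T_eq using D_sub s_in by auto
lemma B_sub: "BB \<subseteq> {1..m}" unfolding B_eq using D_sub s_in by auto
lemma fin_T: "finite TT" using T_sub finite_subset by blast
lemma fin_B: "finite BB" using B_sub finite_subset by blast

lemma card_TB: "card TT = card BB"
proof -
  have "card TT = card (Dset m s)" unfolding T_eq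
    using s_inj by (simp add: card_image inj_on_subset)
  moreover have "card BB = card (Dset m s)" unfolding B_eq
  proof (rule card_image)
    show "inj_on (\<lambda>j. s (Suc j)) (Dset m s)" using s_eq by (auto simp: inj_on_def)
  qed
  ultimately show ?thesis by simp
qed

lemma top_char:
  assumes "x \<in> {1..m}"
  shows "x \<in> TT \<longleftrightarrow> inv s x < m \<and> s (inv s x + 1) < x"
proof -
  have p: "inv s x \<in> {1..m}" "s (inv s x) = x" using inv_s[OF assms] by auto
  show ?thesis
  proof
    assume "x \<in> TT"
    then obtain j where j: "j \<in> Dset m s" "x = s j" unfolding T_eq by auto
    have "inv s x = j" using j(2) permutes_inverses(2)[OF sp] by simp
    then show "inv s x < m \<and> s (inv s x + 1) < x" using j unfolding Dset_def by simp
  next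
    assume "inv s x < m \<and> s (inv s x + 1) < x"
    then have "inv s x \<in> Dset m s" using p unfolding Dset_def by simp
    then have "s (inv s x) \<in> s ` Dset m s" by (rule imageI)
    then show "x \<in> TT" unfolding T_eq using p(2) by simp
  qed
qed

lemma bot_char:
  assumes "x \<in> {1..m}"
  shows "x \<in> BB \<longleftrightarrow> 2 \<le> inv s x \<and> x < s (inv s x - 1)"
proof -
  have p: "inv s x \<in> {1..m}" "s (inv s x) = x" using inv_s[OF assms] by auto
  show ?thesis
  proof
    assume "x \<in> BB"
    then obtain j where j: "j \<in> Dset m s" "x = s (Suc j)" unfolding B_eq by auto
    have "inv s x = Suc j" using j(2) permutes_inverses(2)[OF sp] by simp
    then show "2 \<le> inv s x \<and> x < s (inv s x - 1)" using j unfolding Dset_def by simp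
  next
    assume a: "2 \<le> inv s x \<and> x < s (inv s x - 1)"
    then have "inv s x - 1 \<in> Dset m s" using p unfolding Dset_def by auto
    then have "s (Suc (inv s x - 1)) \<in> (\<lambda>j. s (Suc j)) ` Dset m s" by (rule imageI)
    moreover have "Suc (inv s x - 1) = inv s x" using a by simp
    ultimately show "x \<in> BB" unfolding B_eq using p(2) by simp
  qed
qed

lemma inj_count:
  assumes x: "x \<in> {1..m}"
  shows "card {t\<in>TT. t < x} + cc x + (if x \<in> TT then 1 else 0) \<le> card {b\<in>BB. b < x}"
proof -
  define p where "p = inv s x"
  have p: "p \<in> {1..m}" "s p = x" using inv_s[OF x] p_def by auto
  define D1 where "D1 = {j\<in>Dset m s. s j < x}"
  define D2 where "D2 = {j. p<j \<and> j<m \<and> s (j+1) < x \<and> x < s j}"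
  define D3 where "D3 = (if x \<in> TT then {p} else {})"
  have fD: "finite (Dset m s)" using D_sub finite_subset by blast
  have D2s: "D2 \<subseteq> Dset m s" unfolding D2_def Dset_def using p by auto
  have D3s: "D3 \<subseteq> Dset m s"
  proof (cases "x \<in> TT")
    case True
    then obtain j where "j \<in> Dset m s" "x = s j" unfolding T_eq by auto
    then show ?thesis using p s_eq D3_def True by auto
  qed (simp add: D3_def)
  have c1: "card {t\<in>TT. t < x} = card D1"
  proof -
    have "{t\<in>TT. t < x} = s ` D1" unfolding T_eq D1_def by auto
    then show ?thesis using s_inj by (simp add: card_image inj_on_subset)
  qed
  have c2: "cc x = card D2" unfolding pat231_def D2_def p_def by simp
  have c3: "card D3 = (if x \<in> TT then 1 else 0)" unfolding D3_def by simp
  have fin: "finite D1" "finite D2" "finite D3" using fD D2s D3s unfolding D1_def by (auto intro: finite_subset)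
  have disj: "D1 \<inter> D2 = {}" "(D1 \<union> D2) \<inter> D3 = {}" unfolding D1_def D2_def D3_def using p by auto
  have cU: "card (D1 \<union> D2 \<union> D3) = card D1 + card D2 + card D3"
    using fin disj by (simp add: card_Un_disjoint)
  have "(\<lambda>j. s (Suc j)) ` (D1 \<union> D2 \<union> D3) \<subseteq> {b\<in>BB. b < x}"
  proof
    fix b assume "b \<in> (\<lambda>j. s (Suc j)) ` (D1 \<union> D2 \<union> D3)"
    then obtain j where j: "j \<in> D1 \<union> D2 \<union> D3" "b = s (Suc j)" by auto
    have jD: "j \<in> Dset m s" using j(1) D2s D3s unfolding D1_def by auto
    then have "b \<in> BB" unfolding B_eq using j(2) by auto
    moreover have "b < x"
    proof -
      have "s (Suc j) < s j" using jD unfolding Dset_def by simp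
      then show ?thesis using j unfolding D1_def D2_def D3_def using p
        by (auto split: if_splits)
    qed
    ultimately show "b \<in> {b\<in>BB. b < x}" by simp
  qed
  moreover have "inj_on (\<lambda>j. s (Suc j)) (D1 \<union> D2 \<union> D3)" using s_eq by (auto simp: inj_on_def)
  moreover have "finite {b\<in>BB. b < x}" using fin_B by simp
  ultimately have "card (D1 \<union> D2 \<union> D3) \<le> card {b\<in>BB. b < x}"
    by (metis card_image card_mono)
  then show ?thesis using cU c1 c2 c3 by simp
qed

lemma fp_cond: "x \<in> TT \<Longrightarrow> cc x \<le> card {y\<in>TT. x < y}"
proof -
  assume xT: "x \<in> TT"
  have x: "x \<in> {1..m}" using xT T_sub by auto
  define p where "p = inv s x"
  have p: "p \<in> {1..m}" "s p = x" using inv_s[OF x] p_def by auto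
  define D2 where "D2 = {j. p<j \<and> j<m \<and> s (j+1) < x \<and> x < s j}"
  have c2: "cc x = card D2" unfolding pat231_def D2_def p_def by simp
  have "s ` D2 \<subseteq> {y\<in>TT. x < y}" unfolding T_eq D2_def Dset_def using p by auto
  moreover have "finite {y\<in>TT. x < y}" using fin_T by simp
  moreover have "card (s ` D2) = card D2" using s_inj by (simp add: card_image inj_on_subset)
  ultimately show ?thesis using c2 by (metis card_mono)
qed

lemma gp_cond: "x \<in> NN \<Longrightarrow> cc x \<le> card {y\<in>NN. y < x}"
proof -
  assume xN: "x \<in> NN"
  then have x: "x \<in> {1..m}" by auto
  have "card {t\<in>TT. t < x} + cc x \<le> card {b\<in>BB. b < x}" using inj_count[OF x] by simp
  moreover have "card {b\<in>BB. b < x} \<le> x - 1"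
  proof -
    have "{b\<in>BB. b < x} \<subseteq> {1..<x}" using B_sub by auto
    then show ?thesis by (metis card_atLeastLessThan card_mono finite_atLeastLessThan)
  qed
  moreover have "card {y\<in>NN. y < x} = (x - 1) - card {t\<in>TT. t < x}"
    using compl_count[OF T_sub x] .
  ultimately show ?thesis by simp
qed

lemma okf: "okl (\<lambda>z. z) cc TT fl"
  unfolding fprime_def
proof (rule okl_the)
  show "finite TT" by (rule fin_T)
  show "inj_on (\<lambda>z. z) TT" by simp
  show "\<forall>x\<in>TT. cc x \<le> card {y\<in>TT. x < y}" using fp_cond by blast
  fix l
  show "(distinct l \<and> set l = TT \<and> (\<forall>k<length l. card {a. a < k \<and> l ! k < l ! a} = cc (l ! k)))
     = okl (\<lambda>z. z) cc TT l"
    unfolding okl_def using equiv1[of l cc] by auto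
qed

lemma okg: "okl (\<lambda>z. m - z) cc NN (rev gl)"
  unfolding gprime_def
proof (rule okl_the_rev)
  show "finite NN" by simp
  show "inj_on (\<lambda>z. m - z) NN" by (auto simp: inj_on_def)
  have "{y\<in>NN. m - x < m - y} = {y\<in>NN. y < x}" if "x \<in> NN" for x using that by auto
  then show "\<forall>x\<in>NN. cc x \<le> card {y\<in>NN. m - x < m - y}" using gp_cond by simp
  fix l
  show "(distinct l \<and> set l = NN \<and>
          (\<forall>k<length l. card {b. k < b \<and> b < length l \<and> l ! b < l ! k} = cc (l ! k)))
     = okl (\<lambda>z. m - z) cc NN (rev l)"
  proof (cases "distinct l \<and> set l = NN")
    case True
    have "filter (\<lambda>z. m - y < m - z) (takeWhile (\<lambda>z. z \<noteq> y) (rev l))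
        = filter (\<lambda>z. z < y) (takeWhile (\<lambda>z. z \<noteq> y) (rev l))" if "y \<in> set l" for y
    proof (rule filter_cong)
      fix z assume "z \<in> set (takeWhile (\<lambda>z. z \<noteq> y) (rev l))"
      then have "z \<in> set l" by (meson set_takeWhileD set_rev[THEN equalityD1, THEN subsetD])
      then show "(m - y < m - z) = (z < y)" using that True by auto
    qed simp
    then show ?thesis using True equiv2[of l cc] unfolding okl_def by auto
  next
    case False
    then show ?thesis unfolding okl_def by auto
  qed
qed

lemma len_f: "length fl = length fb"
proof -
  have "length fl = card TT" using okf unfolding okl_def by (metis distinct_card)
  then show ?thesis using card_TB by simp
qed

lemma len_g: "length gl = length gb"
proof -
  have "length gl = card NN" using okg unfolding okl_def by (metis distinct_card length_rev distinct_rev set_rev)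
  also have "\<dots> = m - card TT" using T_sub by (simp add: card_Diff_subset fin_T)
  also have "\<dots> = m - card BB" using card_TB by simp
  also have "\<dots> = card ({1..m} - BB)" using B_sub by (simp add: card_Diff_subset fin_B)
  finally show ?thesis by simp
qed

lemma set_fl: "set fl = TT" and dist_fl: "distinct fl" using okf unfolding okl_def by auto
lemma set_gl: "set gl = NN" and dist_gl: "distinct gl" using okg unfolding okl_def by auto

lemma tau_fl: "map tau fl = fb"
proof (rule nth_equalityI)
  show "length (map tau fl) = length fb" using len_f by simp
  fix k assume "k < length (map tau fl)"
  then have k: "k < length fl" by simp
  have "map_of (zip fl fb) (fl ! k) = Some (fb ! k)"
    using map_of_zip_nth[OF len_f dist_fl] k len_f by simp
  then have "map_of (zip fl fb @ zip gl gb) (fl ! k) = Some (fb ! k)"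
    by (simp add: map_of_append map_add_find_right)
  then show "map tau fl ! k = fb ! k" using k unfolding Phi_def by simp
qed

lemma tau_gl: "map tau gl = gb"
proof (rule nth_equalityI)
  show "length (map tau gl) = length gb" using len_g by simp
  fix k assume "k < length (map tau gl)"
  then have k: "k < length gl" by simp
  have "map_of (zip gl gb) (gl ! k) = Some (gb ! k)"
    using map_of_zip_nth[OF len_g dist_gl] k len_g by simp
  moreover have "map_of (zip fl fb) (gl ! k) = None"
  proof -
    have "gl ! k \<notin> set fl" using k set_gl set_fl nth_mem by fastforce
    moreover have "fst ` set (zip fl fb) = set fl" using len_f by (metis map_fst_zip set_map)
    ultimately show ?thesis by (simp add: map_of_eq_None_iff)
  qed
  ultimately have "map_of (zip fl fb @ zip gl gb) (gl ! k) = Some (gb ! k)"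
    by (simp add: map_of_append map_add_def)
  then show "map tau gl ! k = gb ! k" using k unfolding Phi_def by simp
qed

lemma tau_out: "y \<notin> {1..m} \<Longrightarrow> tau y = y"
proof -
  assume y: "y \<notin> {1..m}"
  have "y \<notin> set fl" "y \<notin> set gl" using y set_fl set_gl T_sub by auto
  moreover have "fst ` set (zip fl fb) = set fl" using len_f by (metis map_fst_zip set_map)
  moreover have "fst ` set (zip gl gb) = set gl" using len_g by (metis map_fst_zip set_map)
  ultimately have "map_of (zip fl fb @ zip gl gb) y = None"
    by (simp add: map_of_eq_None_iff)
  then show ?thesis unfolding Phi_def by (simp del: map_of_append)
qed

lemma tauT: "x \<in> TT \<Longrightarrow> tau x \<in> BB"
proof -
  assume "x \<in> TT"
  then have "tau x \<in> set (map tau fl)" using set_fl by simp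
  then show ?thesis using tau_fl fin_B by simp
qed

lemma tauN: "x \<in> NN \<Longrightarrow> tau x \<in> {1..m} - BB"
proof -
  assume "x \<in> NN"
  then have "tau x \<in> set (map tau gl)" using set_gl by simp
  then show ?thesis using tau_gl by simp
qed

lemma tau_perm: "tau permutes {1..m}"
proof (rule bij_imp_permutes)
  have "{1..m} = set fl \<union> set gl" using set_fl set_gl T_sub by auto
  then have "tau ` {1..m} = set (map tau fl) \<union> set (map tau gl)" by auto
  also have "\<dots> = BB \<union> ({1..m} - BB)" using tau_fl tau_gl fin_B by simp
  also have "\<dots> = {1..m}" using B_sub by auto
  finally have im: "tau ` {1..m} = {1..m}" .
  then have "inj_on tau {1..m}" by (intro finite_surj_inj) auto
  then show "bij_betw tau {1..m} {1..m}" using im by (simp add: bij_betw_def)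
  show "\<And>x. x \<notin> {1..m} \<Longrightarrow> tau x = x" by (rule tau_out)
qed

lemma tau_lt: "x \<in> TT \<Longrightarrow> tau x < x"
proof -
  assume xT: "x \<in> TT"
  then have x: "x \<in> {1..m}" using T_sub by auto
  obtain pre post where e: "fl = pre @ x # post" using xT set_fl by (metis split_list)
  have ss: "tau x = fb ! length pre"
    using sorted_split[OF strict_sorted_list_of_set tau_fl e] by simp
  have xpre: "x \<notin> set pre" using dist_fl e by simp
  have tw: "takeWhile (\<lambda>z. z \<noteq> x) fl = pre" unfolding e using xpre
    by (subst takeWhile_tail) (auto simp: takeWhile_eq_all_conv)
  have c: "length (filter (\<lambda>z. x < z) pre) = cc x" using okf xT set_fl tw unfolding okl_def by auto
  have "length pre = length (filter (\<lambda>z. x < z) pre) + length (filter (\<lambda>z. \<not> x < z) pre)"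
    by (simp add: sum_length_filter_compl)
  moreover have "filter (\<lambda>z. \<not> x < z) pre = filter (\<lambda>z. z < x) pre"
  proof (rule filter_cong)
    fix z assume "z \<in> set pre"
    then have "z \<noteq> x" using xpre by auto
    then show "(\<not> x < z) = (z < x)" by auto
  qed simp
  moreover have "length (filter (\<lambda>z. z < x) pre) \<le> length (filter (\<lambda>z. z < x) fl)"
    unfolding e by simp
  moreover have "length (filter (\<lambda>z. z < x) fl) = card {t\<in>TT. t < x}"
    using distinct_length_filter[OF dist_fl] set_fl by (metis Collect_conj_eq Int_commute Collect_mem_eq)
  ultimately have "length pre = cc x + length (filter (\<lambda>z. z < x) pre)" 
    and "length (filter (\<lambda>z. z < x) pre) \<le> card {t\<in>TT. t < x}" using c by simp_all
  then have "length pre \<le> cc x + card {t\<in>TT. t < x}" by linarith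
  then have "length pre < card {b\<in>BB. b < x}" using inj_count[OF x] xT by simp
  then show ?thesis using ss sorted_nth_lt[OF fin_B] by simp
qed

lemma tau_ge: "x \<in> NN \<Longrightarrow> x \<le> tau x"
proof -
  assume xN: "x \<in> NN"
  then have x: "x \<in> {1..m}" by auto
  obtain pre post where e: "gl = pre @ x # post" using xN set_gl by (metis split_list)
  have ss: "tau x = gb ! length pre"
    using sorted_split[OF strict_sorted_list_of_set tau_gl e] by simp
  have xpost: "x \<notin> set post" using dist_gl e by simp
  have tw: "takeWhile (\<lambda>z. z \<noteq> x) (rev gl) = rev post" unfolding e using xpost
    by (simp, subst takeWhile_tail) (auto simp: takeWhile_eq_all_conv)
  have "\<forall>y\<in>set (rev gl). length (filter (\<lambda>z. m - y < m - z) (takeWhile (\<lambda>z. z \<noteq> y) (rev gl))) = cc y"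
    using okg unfolding okl_def by blast
  then have "length (filter (\<lambda>z. m - x < m - z) (takeWhile (\<lambda>z. z \<noteq> x) (rev gl))) = cc x"
    using xN set_gl by auto
  then have "length (filter (\<lambda>z. m - x < m - z) (rev post)) = cc x"
    using tw by simp
  moreover have "filter (\<lambda>z. m - x < m - z) (rev post) = filter (\<lambda>z. z < x) (rev post)"
  proof (rule filter_cong)
    fix z assume "z \<in> set (rev post)"
    then have "z \<in> NN" using set_gl e by auto
    then show "(m - x < m - z) = (z < x)" using x by auto
  qed simp
  ultimately have c: "length (filter (\<lambda>z. z < x) post) = cc x"
    by (metis length_rev rev_filter)
  have "length (filter (\<lambda>z. z < x) gl) = card {y\<in>NN. y < x}"
    using distinct_length_filter[OF dist_gl] set_gl by (metis Collect_conj_eq Int_commute Collect_mem_eq)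
  moreover have "length (filter (\<lambda>z. z < x) gl) = length (filter (\<lambda>z. z < x) pre) + length (filter (\<lambda>z. z < x) post)"
    unfolding e by simp
  moreover have "length (filter (\<lambda>z. z < x) pre) \<le> length pre" by simp
  ultimately have l1: "card {y\<in>NN. y < x} - cc x \<le> length pre" using c by linarith
  have "card {t\<in>TT. t < x} + cc x \<le> card {b\<in>BB. b < x}" using inj_count[OF x] by simp
  moreover have "card {y\<in>NN. y < x} = (x - 1) - card {t\<in>TT. t < x}" using compl_count[OF T_sub x] .
  moreover have "card {y\<in>{1..m} - BB. y < x} = (x - 1) - card {b\<in>BB. b < x}" using compl_count[OF B_sub x] .
  ultimately have "card {y\<in>{1..m} - BB. y < x} \<le> length pre" using l1 by linarith
  moreover have "length pre < card ({1..m} - BB)"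
  proof -
    have "length pre < length gl" using e by simp
    then show ?thesis using len_g by simp
  qed
  ultimately show ?thesis using ss sorted_nth_ge[of "{1..m} - BB"] by simp
qed

lemma F3: "x \<in> TT \<Longrightarrow> card {y\<in>TT. x < y \<and> tau y < tau x} = cc x"
proof -
  assume xT: "x \<in> TT"
  obtain pre post where e: "fl = pre @ x # post" using xT set_fl by (metis split_list)
  have so: "\<forall>y\<in>set pre. tau y < tau x" "\<forall>y\<in>set post. tau x < tau y"
    using sorted_split[OF strict_sorted_list_of_set tau_fl e] by auto
  have xpre: "x \<notin> set pre" using dist_fl e by simp
  have tw: "takeWhile (\<lambda>z. z \<noteq> x) fl = pre" unfolding e using xpre
    by (subst takeWhile_tail) (auto simp: takeWhile_eq_all_conv)
  have c: "length (filter (\<lambda>z. x < z) pre) = cc x" using okf xT set_fl tw unfolding okl_def by auto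
  have "{y\<in>TT. x < y \<and> tau y < tau x} = set (filter (\<lambda>z. x < z) pre)"
  proof (rule set_eqI, rule iffI)
    fix y assume y: "y \<in> {y\<in>TT. x < y \<and> tau y < tau x}"
    then have "y \<in> set pre \<or> y = x \<or> y \<in> set post" using set_fl e by auto
    then show "y \<in> set (filter (\<lambda>z. x < z) pre)" using y so by auto
  next
    fix y assume "y \<in> set (filter (\<lambda>z. x < z) pre)"
    then show "y \<in> {y\<in>TT. x < y \<and> tau y < tau x}" using so set_fl e by auto
  qed
  moreover have "distinct (filter (\<lambda>z. x < z) pre)" using dist_fl e by simp
  ultimately show ?thesis using c distinct_card by metis
qed

lemma F4: "x \<in> NN \<Longrightarrow> card {y\<in>NN. y < x \<and> tau x < tau y} = cc x"
proof -
  assume xN: "x \<in> NN"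
  then have x: "x \<in> {1..m}" by auto
  obtain pre post where e: "gl = pre @ x # post" using xN set_gl by (metis split_list)
  have so: "\<forall>y\<in>set pre. tau y < tau x" "\<forall>y\<in>set post. tau x < tau y"
    using sorted_split[OF strict_sorted_list_of_set tau_gl e] by auto
  have xpost: "x \<notin> set post" using dist_gl e by simp
  have tw: "takeWhile (\<lambda>z. z \<noteq> x) (rev gl) = rev post" unfolding e using xpost
    by (simp, subst takeWhile_tail) (auto simp: takeWhile_eq_all_conv)
  have "\<forall>y\<in>set (rev gl). length (filter (\<lambda>z. m - y < m - z) (takeWhile (\<lambda>z. z \<noteq> y) (rev gl))) = cc y"
    using okg unfolding okl_def by blast
  then have "length (filter (\<lambda>z. m - x < m - z) (takeWhile (\<lambda>z. z \<noteq> x) (rev gl))) = cc x"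
    using xN set_gl by auto
  then have "length (filter (\<lambda>z. m - x < m - z) (rev post)) = cc x"
    using tw by simp
  moreover have "filter (\<lambda>z. m - x < m - z) (rev post) = filter (\<lambda>z. z < x) (rev post)"
  proof (rule filter_cong)
    fix z assume "z \<in> set (rev post)"
    then have "z \<in> NN" using set_gl e by auto
    then show "(m - x < m - z) = (z < x)" using x by auto
  qed simp
  ultimately have c: "length (filter (\<lambda>z. z < x) post) = cc x"
    by (metis length_rev rev_filter)
  have "{y\<in>NN. y < x \<and> tau x < tau y} = set (filter (\<lambda>z. z < x) post)"
  proof (rule set_eqI, rule iffI)
    fix y assume y: "y \<in> {y\<in>NN. y < x \<and> tau x < tau y}"
    then have "y \<in> set pre \<or> y = x \<or> y \<in> set post" using set_gl e by auto
    then show "y \<in> set (filter (\<lambda>z. z < x) post)" using y so by auto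
  next
    fix y assume "y \<in> set (filter (\<lambda>z. z < x) post)"
    then show "y \<in> {y\<in>NN. y < x \<and> tau x < tau y}" using so set_gl e by auto
  qed
  moreover have "distinct (filter (\<lambda>z. z < x) post)" using dist_gl e by simp
  ultimately show ?thesis using c distinct_card by metis
qed

lemma walk_c:
  assumes x: "x \<in> {2..m}"
  shows "int (cc x) - int (card {j. inv s x < j \<and> j < m \<and> s j < x \<and> x < s (j+1)}) = (if x \<in> TT then 0 else 1)"
proof -
  have x1: "x \<in> {1..m}" using x by auto
  define p where "p = inv s x"
  have p: "p \<in> {1..m}" "s p = x" using inv_s[OF x1] p_def by auto
  have "p \<noteq> m" using p sm x by auto
  then have pm: "p < m" using p by auto
  have ne: "\<forall>j. p < j \<and> j \<le> m \<longrightarrow> s j \<noteq> x" using p s_eq by auto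
  have w: "int (cc x) - int (card {j. p<j \<and> j<m \<and> s j < x \<and> x < s (j+1)})
    = (if x < s (p+1) then 1 else 0) - (if x < s m then 1 else 0)"
    using walk[OF pm ne] unfolding pat231_def p_def by simp
  have "s (p+1) \<noteq> x" using ne pm by simp
  then have "(x < s (p+1)) = (x \<notin> TT)" using top_char[OF x1] pm p_def by auto
  then show ?thesis using w sm x p_def by auto
qed

lemma one_NN: "1 \<in> NN"
proof -
  have "1 \<notin> TT"
  proof
    assume "1 \<in> TT"
    then obtain j where j: "j \<in> Dset m s" "s j = 1" unfolding T_eq by auto
    then have "j + 1 \<in> {1..m}" unfolding Dset_def by auto
    then have "s (j+1) \<ge> 1" using s_in by auto
    then show False using j unfolding Dset_def by auto
  qed
  then show ?thesis using m2 by auto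
qed

lemma tau1: "tau 1 = m"
proof -
  have "1 \<in> set (rev gl)" using one_NN set_gl by simp
  then obtain z rest where r: "rev gl = z # rest" by (cases "rev gl") auto
  have z: "z \<in> NN" using r set_gl by (metis list.set_intros(1) set_rev)
  have "cc z = 0" using okg z r unfolding okl_def by auto
  have z1: "z = 1"
  proof (rule ccontr)
    assume "z \<noteq> 1"
    then have z2: "z \<in> {2..m}" using z by auto
    have "int (cc z) - int (card {j. inv s z < j \<and> j < m \<and> s j < z \<and> z < s (j+1)}) = 1"
      using walk_c[OF z2] z by simp
    then have "int (cc z) \<ge> 1" by linarith
    then show False using \<open>cc z = 0\<close> by simp
  qed
  have e: "gl = rev rest @ 1 # []" using r z1 by (metis rev_rev_ident rev.simps(2))
  have "m \<notin> BB"
  proof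
    assume "m \<in> BB"
    then obtain j where "j \<in> Dset m s" "s (Suc j) = m" unfolding B_eq by auto
    moreover then have "s j \<in> {1..m}" using s_in unfolding Dset_def by auto
    ultimately show False unfolding Dset_def by auto
  qed
  then have "m \<in> set gb" using m2 by simp
  then obtain y where y: "y \<in> set gl" "tau y = m" using tau_gl by (metis imageE set_map)
  show ?thesis
  proof (cases "y = 1")
    case False
    then have "y \<in> set (rev rest)" using y e by auto
    then have "tau y < tau 1" using sorted_split[OF strict_sorted_list_of_set tau_gl e] by auto
    moreover have "tau 1 \<le> m" using tauN[OF one_NN] by auto
    ultimately show ?thesis using y by simp
  qed (use y in simp)
qed

end



locale sigctx =
  fixes n :: nat and sg :: "nat \<Rightarrow> nat"
  assumes sgp: "sg permutes {1..n+1}"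
begin

lemma sg_in: "j \<in> {1..n+1} \<Longrightarrow> sg j \<in> {1..n+1}" using permutes_in_image[OF sgp, of j] by blast

lemma sg_eq: "sg i = sg j \<Longrightarrow> i = j" using permutes_inj[OF sgp] by (simp add: inj_eq)

lemma inv_sg: "i \<in> {1..n+1} \<Longrightarrow> inv sg i \<in> {1..n+1} \<and> sg (inv sg i) = i"
  using permutes_in_image[OF permutes_inv[OF sgp], of i] permutes_inverses(1)[OF sgp, of i] by blast

lemma hat_perm: "hat n sg permutes {1..n+2}"
proof (rule bij_imp_permutes)
  have im: "hat n sg ` {1..n+2} = {1..n+2}"
  proof (rule set_eqI, rule iffI)
    fix y assume "y \<in> hat n sg ` {1..n+2}"
    then obtain j where j: "j \<in> {1..n+2}" "y = hat n sg j" by auto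
    show "y \<in> {1..n+2}"
    proof (cases "j \<le> n+1")
      case True
      then show ?thesis using j sg_in[of j] unfolding hat_def by auto
    next
      case False
      then show ?thesis using j unfolding hat_def by auto
    qed
  next
    fix y assume y: "y \<in> {1..n+2}"
    show "y \<in> hat n sg ` {1..n+2}"
    proof (cases "y = 1")
      case True
      then show ?thesis unfolding hat_def by (intro image_eqI[of _ _ "n+2"]) auto
    next
      case False
      then have "y - 1 \<in> {1..n+1}" using y by auto
      then have "inv sg (y-1) \<in> {1..n+1}" "sg (inv sg (y-1)) = y - 1" using inv_sg by auto
      then show ?thesis using False y unfolding hat_def by (intro image_eqI[of _ _ "inv sg (y-1)"]) auto
    qed
  qed
  then have "inj_on (hat n sg) {1..n+2}" by (intro finite_surj_inj) auto
  then show "bij_betw (hat n sg) {1..n+2} {1..n+2}" using im by (simp add: bij_betw_def)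
  show "\<And>x. x \<notin> {1..n+2} \<Longrightarrow> hat n sg x = x" unfolding hat_def by auto
qed

lemma hat_last: "hat n sg (n+2) = 1" unfolding hat_def by simp

lemma hat_in: "j \<in> {1..n+1} \<Longrightarrow> hat n sg j = sg j + 1" unfolding hat_def by auto

end

sublocale sigctx \<subseteq> ph: phictx "n+2" "hat n sg"
proof
  show "hat n sg permutes {1..n+2}" by (rule hat_perm)
  show "hat n sg (n+2) = 1" by (rule hat_last)
  show "2 \<le> n+2" by simp
qed

context sigctx
begin

abbreviation "ss \<equiv> hat n sg"
abbreviation "ta \<equiv> Phi (n+2) (hat n sg)"
abbreviation "pp \<equiv> Psi n sg"

lemma inv_hat: "i \<in> {1..n+1} \<Longrightarrow> inv ss (i+1) = inv sg i"
proof -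
  assume i: "i \<in> {1..n+1}"
  have p: "inv sg i \<in> {1..n+1}" "sg (inv sg i) = i" using inv_sg[OF i] by auto
  then have "ss (inv sg i) = i + 1" using hat_in by simp
  then show ?thesis using permutes_inverses(2)[OF hat_perm, of "inv sg i"] by simp
qed

lemma pp_in: "j \<in> {1..n+1} \<Longrightarrow> pp j = ta (j+1)" unfolding Psi_def by auto

lemma ta_perm: "ta permutes {1..n+2}" using ph.tau_perm by simp
lemma ta1: "ta 1 = n+2" using ph.tau1 by simp

lemma ta_eq: "ta a = ta b \<Longrightarrow> a = b" using permutes_inj[OF ta_perm] by (simp add: inj_eq)

lemma ta_in: "j \<in> {1..n+2} \<Longrightarrow> ta j \<in> {1..n+2}" using permutes_in_image[OF ta_perm, of j] by blast

lemma pp_perm: "pp permutes {1..n+1}"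
proof (rule bij_imp_permutes)
  have im0: "ta ` {1..n+2} = {1..n+2}" using ta_perm by (simp add: permutes_image)
  have "pp ` {1..n+1} = ta ` {2..n+2}"
  proof (rule set_eqI, rule iffI)
    fix y assume "y \<in> pp ` {1..n+1}"
    then obtain j where "j \<in> {1..n+1}" "y = pp j" by auto
    then show "y \<in> ta ` {2..n+2}" using pp_in by auto
  next
    fix y assume "y \<in> ta ` {2..n+2}"
    then obtain j where j: "j \<in> {2..n+2}" "y = ta j" by auto
    then have j1: "j - 1 \<in> {1..n+1}" by auto
    then have "pp (j - 1) = ta (j - 1 + 1)" by (rule pp_in)
    then have "pp (j - 1) = y" using j by simp
    then show "y \<in> pp ` {1..n+1}" using j1 by blast
  qed
  also have "\<dots> = ta ` ({1..n+2} - {1})" by (intro arg_cong[where f="\<lambda>A. ta ` A"]) auto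
  also have "\<dots> = ta ` {1..n+2} - ta ` {1}"
    using permutes_inj[OF ta_perm] by (intro inj_on_image_set_diff) (auto intro: inj_on_subset)
  also have "\<dots> = {1..n+1}" using im0 ta1 by auto
  finally have im: "pp ` {1..n+1} = {1..n+1}" .
  then have "inj_on pp {1..n+1}" by (intro finite_surj_inj) auto
  then show "bij_betw pp {1..n+1} {1..n+1}" using im by (simp add: bij_betw_def)
  show "\<And>x. x \<notin> {1..n+1} \<Longrightarrow> pp x = x" unfolding Psi_def by auto
qed

lemma inv_pp: assumes i: "i \<in> {1..n}" shows "inv pp (i+1) = inv ta (i+1) - 1"
proof -
  have x: "i + 1 \<in> {1..n+2}" using i by auto
  define y where "y = inv ta (i+1)"
  have y: "y \<in> {1..n+2}" "ta y = i + 1"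
    using permutes_in_image[OF permutes_inv[OF ta_perm], of "i+1"] permutes_inverses(1)[OF ta_perm, of "i+1"] x y_def
    by auto
  have "y \<noteq> 1" using y ta1 i by auto
  then have y1: "y - 1 \<in> {1..n+1}" using y by auto
  then have "pp (y - 1) = ta (y - 1 + 1)" by (rule pp_in)
  then have "pp (y - 1) = i + 1" using y \<open>y \<noteq> 1\<close> by simp
  then have "inv pp (i+1) = y - 1" using permutes_inverses(2)[OF pp_perm, of "y-1"] by simp
  then show ?thesis using y_def by simp
qed

lemma step_eq: assumes i: "i \<in> {1..n}" shows "fv_step n sg i = yzl_step n pp i"
proof -
  define x where "x = i + 1"
  have x: "x \<in> {1..n+2}" "x \<in> {2..n+2}" using i x_def by auto
  define p where "p = inv sg i"
  have i1: "i \<in> {1..n+1}" using i by auto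
  have p: "p \<in> {1..n+1}" "sg p = i" using inv_sg[OF i1] p_def by auto
  have ip: "inv ss x = p" using inv_hat[OF i1] p_def x_def by simp
  define a where "a = ext0 (Suc n) sg (p - 1)"
  define b where "b = ext0 (Suc n) sg (p + 1)"
  have tp: "x \<in> ph.TT \<longleftrightarrow> b < i"
  proof -
    have "x \<in> ph.TT \<longleftrightarrow> p < n+2 \<and> ss (p+1) < x" using ph.top_char[OF x(1)] ip by simp
    also have "\<dots> \<longleftrightarrow> b < i"
    proof (cases "p \<le> n")
      case True
      then have "ss (p+1) = sg (p+1) + 1" "b = sg (p+1)" using hat_in[of "p+1"] p unfolding b_def ext0_def by auto
      then show ?thesis using p x_def by auto
    next
      case False
      then have "p = n + 1" using p by auto
      then have "ss (p+1) = 1" "b = 0" unfolding b_def ext0_def hat_def by auto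
      then show ?thesis using p x_def i by auto
    qed
    finally show ?thesis .
  qed
  have bt: "x \<in> ph.BB \<longleftrightarrow> i < a"
  proof -
    have "x \<in> ph.BB \<longleftrightarrow> 2 \<le> p \<and> x < ss (p - 1)" using ph.bot_char[OF x(1)] ip by simp
    also have "\<dots> \<longleftrightarrow> i < a"
    proof (cases "2 \<le> p")
      case True
      then have "p - 1 \<in> {1..n+1}" using p by auto
      then have "ss (p-1) = sg (p-1) + 1" "a = sg (p-1)" using hat_in[of "p-1"] unfolding a_def ext0_def by auto
      then show ?thesis using True x_def by auto
    next
      case False
      then have "p = 1" using p by auto
      then have "a = 0" unfolding a_def ext0_def by auto
      then show ?thesis using False by auto
    qed
    finally show ?thesis .
  qed
  have an: "a \<noteq> i"
  proof
    assume "a = i"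
    then have "2 \<le> p \<and> sg (p - 1) = sg p" using p i1 unfolding a_def ext0_def by (auto split: if_splits)
    then show False using sg_eq by fastforce
  qed
  have bn: "b \<noteq> i"
  proof
    assume "b = i"
    then have "p + 1 \<le> n + 1 \<and> sg (p + 1) = sg p" using p i1 unfolding b_def ext0_def by (auto split: if_splits)
    then show False using sg_eq by fastforce
  qed
  have fv: "fv_step n sg i = (if x \<in> ph.BB \<and> x \<notin> ph.TT then U
         else if x \<notin> ph.BB \<and> x \<in> ph.TT then D
         else if x \<notin> ph.BB \<and> x \<notin> ph.TT then Lb else Lr)"
    unfolding fv_step_def Let_def p_def[symmetric] a_def[symmetric] b_def[symmetric] tp bt
    using an bn by auto
  have pi: "pp i = ta x" using pp_in[OF i1] x_def by simp
  have t1: "i < pp i \<longleftrightarrow> x \<notin> ph.TT"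
  proof (cases "x \<in> ph.TT")
    case True
    then show ?thesis using ph.tau_lt[OF True] pi x_def by simp
  next
    case False
    then show ?thesis using ph.tau_ge[of x] x pi x_def by simp
  qed
  have t2: "i + 1 \<le> inv pp (i+1) \<longleftrightarrow> x \<in> ph.BB"
  proof -
    define y where "y = inv ta x"
    have y: "y \<in> {1..n+2}" "ta y = x"
      using permutes_in_image[OF permutes_inv[OF ta_perm], of x] permutes_inverses(1)[OF ta_perm, of x] x y_def
      by auto
    have e: "inv pp (i+1) = y - 1" using inv_pp[OF i] y_def x_def by simp
    show ?thesis
    proof (cases "y \<in> ph.TT")
      case True
      then show ?thesis using ph.tauT[OF True] ph.tau_lt[OF True] y e x_def by auto
    next
      case False
      then have "y \<in> ph.NN" using y by auto
      then show ?thesis using ph.tauN[of y] ph.tau_ge[of y] y e x_def by auto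
    qed
  qed
  have yz: "yzl_step n pp i = (if x \<in> ph.BB \<and> x \<notin> ph.TT then U
         else if x \<notin> ph.BB \<and> x \<in> ph.TT then D
         else if x \<notin> ph.BB \<and> x \<notin> ph.TT then Lb else Lr)"
    unfolding yzl_step_def using t1 t2 by (auto simp: not_less)
  show ?thesis using fv yz by simp
qed

lemma pat_eq: assumes i: "i \<in> {1..n}" shows "pat213 n sg i = nest n pp i"
proof -
  define x where "x = i + 1"
  have x: "x \<in> {1..n+2}" "x \<in> {2..n+2}" using i x_def by auto
  define p where "p = inv sg i"
  have i1: "i \<in> {1..n+1}" using i by auto
  have p: "p \<in> {1..n+1}" "sg p = i" using inv_sg[OF i1] p_def by auto
  have ip: "inv ss x = p" using inv_hat[OF i1] p_def x_def by simp
  define A where "A = card {j. inv ss x < j \<and> j < n+2 \<and> ss j < x \<and> x < ss (j+1)}"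
  have w: "int (ph.cc x) - int A = (if x \<in> ph.TT then 0 else 1)"
    using ph.walk_c[OF x(2)] unfolding A_def by simp
  have pA: "pat213 n sg i = A"
  proof -
    have "{j. inv sg i < j \<and> j < n + 1 \<and> sg j < i \<and> i < sg (j + 1)}
        = {j. inv ss x < j \<and> j < n+2 \<and> ss j < x \<and> x < ss (j+1)}"
    proof (rule set_eqI)
      fix j
      show "j \<in> {j. inv sg i < j \<and> j < n + 1 \<and> sg j < i \<and> i < sg (j + 1)} \<longleftrightarrow>
            j \<in> {j. inv ss x < j \<and> j < n+2 \<and> ss j < x \<and> x < ss (j+1)}"
      proof (cases "p < j \<and> j < n + 2")
        case True
        then have j1: "j \<in> {1..n+1}" using p by auto
        show ?thesis
        proof (cases "j < n + 1")
          case True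
          then have "ss (j+1) = sg (j+1) + 1" using hat_in[of "j+1"] by auto
          then show ?thesis using hat_in[OF j1] ip p_def x_def True by auto
        next
          case False
          then have "j = n + 1" using j1 by auto
          then have "ss (j+1) = 1" using hat_last by simp
          then show ?thesis using False ip p_def x_def by auto
        qed
      next
        case False
        then show ?thesis using ip p_def by auto
      qed
    qed
    then show ?thesis unfolding pat213_def A_def by simp
  qed
  have nst: "nest n pp i = card {j\<in>{1..n+1}. (j < i \<and> i < pp i \<and> pp i < pp j) \<or> (pp j < pp i \<and> pp i \<le> i \<and> i < j)}"
    unfolding nest_def by simp
  have pi: "pp i = ta x" using pp_in[OF i1] x_def by simp
  show ?thesis
  proof (cases "x \<in> ph.TT")
    case True
    have lt: "ta x < x" using ph.tau_lt[OF True] by simp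
    have "{j\<in>{1..n+1}. (j < i \<and> i < pp i \<and> pp i < pp j) \<or> (pp j < pp i \<and> pp i \<le> i \<and> i < j)}
        = {j\<in>{1..n+1}. (\<lambda>y. ta y < ta x \<and> x < y) (Suc j)}"
      using pi lt pp_in x_def by auto
    then have "nest n pp i = card {y\<in>{2..n+2}. ta y < ta x \<and> x < y}"
      using nst card_shift[of "n+1" "\<lambda>y. ta y < ta x \<and> x < y"] by simp
    also have "{y\<in>{2..n+2}. ta y < ta x \<and> x < y} = {y\<in>ph.TT. x < y \<and> ta y < ta x}"
    proof (rule set_eqI, rule iffI)
      fix y assume y: "y \<in> {y\<in>{2..n+2}. ta y < ta x \<and> x < y}"
      show "y \<in> {y\<in>ph.TT. x < y \<and> ta y < ta x}"
      proof (rule ccontr)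
        assume "y \<notin> {y\<in>ph.TT. x < y \<and> ta y < ta x}"
        then have "y \<in> ph.NN" using y by auto
        then have "y \<le> ta y" using ph.tau_ge by simp
        then show False using y lt by auto
      qed
    next
      fix y assume y: "y \<in> {y\<in>ph.TT. x < y \<and> ta y < ta x}"
      then show "y \<in> {y\<in>{2..n+2}. ta y < ta x \<and> x < y}" using ph.T_sub x by auto
    qed
    also have "card \<dots> = ph.cc x" using ph.F3[OF True] by simp
    finally show ?thesis using pA w True by simp
  next
    case False
    then have xN: "x \<in> ph.NN" using x by auto
    have ge: "x \<le> ta x" using ph.tau_ge[OF xN] by simp
    have "{j\<in>{1..n+1}. (j < i \<and> i < pp i \<and> pp i < pp j) \<or> (pp j < pp i \<and> pp i \<le> i \<and> i < j)}
        = {j\<in>{1..n+1}. (\<lambda>y. y < x \<and> ta x < ta y) (Suc j)}"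
      using pi ge pp_in x_def by auto
    then have "nest n pp i = card {y\<in>{2..n+2}. y < x \<and> ta x < ta y}"
      using nst card_shift[of "n+1" "\<lambda>y. y < x \<and> ta x < ta y"] by simp
    also have "{y\<in>{2..n+2}. y < x \<and> ta x < ta y} = {y\<in>ph.NN. y < x \<and> ta x < ta y} - {1}"
    proof (rule set_eqI, rule iffI)
      fix y assume y: "y \<in> {y\<in>{2..n+2}. y < x \<and> ta x < ta y}"
      have "y \<notin> ph.TT"
      proof
        assume "y \<in> ph.TT"
        then have "ta y < y" using ph.tau_lt by simp
        then show False using y ge by auto
      qed
      then show "y \<in> {y\<in>ph.NN. y < x \<and> ta x < ta y} - {1}" using y by auto
    next
      fix y assume y: "y \<in> {y\<in>ph.NN. y < x \<and> ta x < ta y} - {1}"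
      then show "y \<in> {y\<in>{2..n+2}. y < x \<and> ta x < ta y}" by auto
    qed
    also have "card \<dots> = ph.cc x - 1"
    proof -
      have "ta x \<noteq> n + 2"
      proof
        assume "ta x = n + 2"
        then have "ta x = ta 1" using ta1 by simp
        then have "x = 1" by (rule ta_eq)
        then show False using x by auto
      qed
      moreover have "ta x \<in> {1..n+2}" using ta_in x by simp
      ultimately have "ta x < ta 1" using ta1 by auto
      then have "1 \<in> {y\<in>ph.NN. y < x \<and> ta x < ta y}" using ph.one_NN x by auto
      moreover have "finite {y\<in>ph.NN. y < x \<and> ta x < ta y}" by simp
      ultimately show ?thesis using ph.F4[OF xN] by (simp add: card_Diff_singleton)
    qed
    finally show ?thesis using pA w False by simp
  qed
qed

end

theorem theorem2p7:
  fixes n :: nat and \<sigma> :: "nat \<Rightarrow> nat"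
  assumes "\<sigma> permutes {1..n+1}"
  shows "psiFV n \<sigma> = psiYZL n (Psi n \<sigma>)"
proof -
  interpret sigctx n \<sigma> by unfold_locales (rule assms)
  have "map (fv_step n \<sigma>) [1..<n+1] = map (yzl_step n (Psi n \<sigma>)) [1..<n+1]"
    by (rule map_cong) (auto intro: step_eq)
  moreover have "map (pat213 n \<sigma>) [1..<n+1] = map (nest n (Psi n \<sigma>)) [1..<n+1]"
    by (rule map_cong) (auto intro: pat_eq)
  ultimately show ?thesis unfolding psiFV_def psiYZL_def by simp
qed

end
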